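(* Let $n\geq 13$ be an integer with $n\not\equiv 2\pmod 3$. If $f:V(C_n)\to\{-1,1,2\}$ is any function with $\sum_{v\in V(C_n)}f(v)=1$, then there exists a vertex $y\in V(C_n)$ such that $\sum_{z\in N_{C_n}[y]}f(z)<0$.
   Context: $C_n$ denotes the cycle on $n$ vertices, and for a vertex $y$ of $C_n$, $N_{C_n}[y]$ is the closed neighborhood of $y$ in $C_n$, i.e. $y$ together with its two neighbors on the cycle. *)

theory Defs
  imports Main
begin

definition cycle_vertices :: "nat \<Rightarrow> nat set" where
  "cycle_vertices n = {0..<n}"

definition cycle_adj :: "nat \<Rightarrow> nat \<Rightarrow> nat \<Rightarrow> bool" where
  "cycle_adj n u v \<longleftrightarrow> u < n \<and> v < n \<and> u \<noteq> v \<and> (v = (u + 1) mod n \<or> u = (v + 1) mod n)"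

definition cycle_closed_nbhd :: "nat \<Rightarrow> nat \<Rightarrow> nat set" where
  "cycle_closed_nbhd n y = {y} \<union> {z \<in> cycle_vertices n. cycle_adj n y z}"

end

theory Submission
  imports Defs
begin

lemma fin_case:
  fixes a1 a2 a3 a5 a6 a7 :: int
  assumes "a1 \<in> {-1,1,2}" "a2 \<in> {-1,1,2}" "a3 \<in> {-1,1,2}"
          "a5 \<in> {-1,1,2}" "a6 \<in> {-1,1,2}" "a7 \<in> {-1,1,2}"
    and "a1+a2+a3 \<ge> 0" "a2+a3+1 \<ge> 0" "a3+1+a5 \<ge> 0" "1+a5+a6 \<ge> 0" "a5+a6+a7 \<ge> 0"
    and "(a1+a2+a3)+(a2+a3+1)+(a3+1+a5)+(1+a5+a6)+(a5+a6+a7) \<le> 3"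
  shows False
  using assms by auto

lemma mod_inj:
  fixes a i j n :: nat
  assumes "(a+i) mod n = (a+j) mod n" "i < n" "j < n"
  shows "i = j"
proof (rule ccontr)
  assume ne: "i \<noteq> j"
  show False
  proof (cases "i < j")
    case True
    then have "n dvd (a+j) - (a+i)" using assms(1) mod_eq_dvd_iff_nat[of "a+i" "a+j" n] by simp
    then have "n dvd j - i" by simp
    then show False using True assms by (metis diff_less_mono2 dvd_imp_le diff_less zero_less_diff less_imp_diff_less not_le)
  next
    case False
    then have "j < i" using ne by simp
    then have "n dvd (a+i) - (a+j)" using assms(1) mod_eq_dvd_iff_nat[of "a+j" "a+i" n] by simp
    then have "n dvd i - j" by simp
    then show False using \<open>j < i\<close> assms by (metis dvd_imp_le less_imp_diff_less not_le zero_less_diff)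
  qed
qed

lemma shift_bij:
  fixes k n :: nat
  assumes "n > 0"
  shows "bij_betw (\<lambda>y. (y + k) mod n) {0..<n} {0..<n}"
proof -
  have inj: "inj_on (\<lambda>y. (y + k) mod n) {0..<n}"
  proof (rule inj_onI)
    fix x y assume "x \<in> {0..<n}" "y \<in> {0..<n}" "(x + k) mod n = (y + k) mod n"
    then show "x = y" using mod_inj[of k x n y] by (simp add: add.commute)
  qed
  have sub: "(\<lambda>y. (y + k) mod n) ` {0..<n} \<subseteq> {0..<n}" using assms by auto
  have "card ((\<lambda>y. (y + k) mod n) ` {0..<n}) = n" using card_image[OF inj] by simp
  then have "(\<lambda>y. (y + k) mod n) ` {0..<n} = {0..<n}"
    using sub by (metis card_atLeastLessThan card_subset_eq diff_zero finite_atLeastLessThan)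
  then show ?thesis using inj unfolding bij_betw_def by simp
qed

lemma shift_sum:
  fixes f :: "nat \<Rightarrow> int" and k :: nat
  assumes "n > 0"
  shows "(\<Sum>y\<in>{0..<n}. f ((y + k) mod n)) = (\<Sum>y\<in>{0..<n}. f y)"
  using sum.reindex_bij_betw[OF shift_bij[OF assms, of k], of f] by simp

theorem mainTheorem9:
  fixes n :: nat and f :: "nat \<Rightarrow> int"
  assumes "n \<ge> 13"
    and "n mod 3 \<noteq> 2"
    and "\<forall>v \<in> cycle_vertices n. f v \<in> {-1, 1, 2}"
    and "(\<Sum>v \<in> cycle_vertices n. f v) = 1"
  shows "\<exists>y \<in> cycle_vertices n. (\<Sum>z \<in> cycle_closed_nbhd n y. f z) < 0"
proof (rule ccontr)
  assume H: "\<not> ?thesis"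
  define S where "S y = f ((y + (n - 1)) mod n) + f y + f ((y + 1) mod n)" for y
  have n0: "n > 0" using assms(1) by simp
  have nb: "cycle_closed_nbhd n y = {(y + (n - 1)) mod n, y, (y + 1) mod n}" if "y < n" for y
  proof -
    have "{z \<in> cycle_vertices n. cycle_adj n y z} = {(y + (n - 1)) mod n, (y + 1) mod n}"
    proof (intro equalityI subsetI)
      fix z assume "z \<in> {z \<in> cycle_vertices n. cycle_adj n y z}"
      then have z: "z < n" "z \<noteq> y" "z = (y + 1) mod n \<or> y = (z + 1) mod n"
        by (auto simp: cycle_vertices_def cycle_adj_def)
      show "z \<in> {(y + (n - 1)) mod n, (y + 1) mod n}"
      proof (cases "z = (y + 1) mod n")
        case False
        then have "y = (z + 1) mod n" using z by simp
        then have "(y + (n - 1)) mod n = ((z+1) mod n + (n-1)) mod n" by simp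
        also have "\<dots> = (z + 1 + (n - 1)) mod n" by (simp add: mod_add_left_eq)
        also have "\<dots> = (z + n) mod n" using n0 by simp
        also have "\<dots> = z" using z by simp
        finally show ?thesis by simp
      qed simp
    next
      fix z assume "z \<in> {(y + (n - 1)) mod n, (y + 1) mod n}"
      moreover have "(y + (n - 1)) mod n \<noteq> y"
        using mod_inj[of y "n-1" n 0] that assms(1) by auto
      moreover have "(y + 1) mod n \<noteq> y"
        using mod_inj[of y 1 n 0] that assms(1) by auto
      moreover have "y = (((y + (n - 1)) mod n) + 1) mod n"
      proof -
        have "(((y + (n - 1)) mod n) + 1) mod n = (y + (n-1) + 1) mod n" by (metis mod_add_left_eq)
        also have "\<dots> = (y + n) mod n" using n0 by simp
        finally show ?thesis using that by simp
      qed
      ultimately show "z \<in> {z \<in> cycle_vertices n. cycle_adj n y z}"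
        using that n0 by (auto simp: cycle_vertices_def cycle_adj_def)
    qed
    then show ?thesis unfolding cycle_closed_nbhd_def by auto
  qed
  have Sy: "(\<Sum>z \<in> cycle_closed_nbhd n y. f z) = S y" if "y < n" for y
  proof -
    have d1: "(y + (n - 1)) mod n \<noteq> y"
      using mod_inj[of y "n-1" n 0] that assms(1) by auto
    have d2: "(y + 1) mod n \<noteq> y"
      using mod_inj[of y 1 n 0] that assms(1) by auto
    have d3: "(y + (n - 1)) mod n \<noteq> (y + 1) mod n"
      using mod_inj[of y "n-1" n 1] that assms(1) by auto
    show ?thesis using nb[OF that] d1 d2 d3 by (simp add: S_def)
  qed
  have Snn: "S y \<ge> 0" if "y < n" for y
    using H Sy[OF that] that by (force simp: cycle_vertices_def)
  have sumf: "(\<Sum>y\<in>{0..<n}. f y) = 1" using assms(4) by (simp add: cycle_vertices_def)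
  have sumS: "(\<Sum>y\<in>{0..<n}. S y) = 3"
    unfolding S_def sum.distrib
    using shift_sum[OF n0, of f "n-1"] shift_sum[OF n0, of f 1] sumf
    by (simp add: cycle_vertices_def)
  have "\<exists>v<n. f v = 1"
  proof (rule ccontr)
    assume "\<not> ?thesis"
    then have "\<forall>v\<in>{0..<n}. f v = 3 * (if f v = 2 then 1 else 0) - 1"
      using assms(3) by (auto simp: cycle_vertices_def)
    then have "(\<Sum>y\<in>{0..<n}. f y) = (\<Sum>y\<in>{0..<n}. 3 * (if f y = 2 then 1 else 0) - 1)"
      by (intro sum.cong) auto
    also have "\<dots> = 3 * int (card {y\<in>{0..<n}. f y = 2}) - int n"
      by (simp add: sum_subtractf sum_distrib_left[symmetric] sum.If_cases Int_def conj_commute)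
    finally have "3 * int (card {y\<in>{0..<n}. f y = 2}) = int n + 1" using sumf by simp
    then have "int n mod 3 = 2" by presburger
    then show False using assms(2) by presburger
  qed
  then obtain v where v: "v < n" "f v = 1" by blast
  define idx where "idx k = (v + (n - 3) + k) mod n" for k
  have idxn: "idx k < n" for k using n0 by (simp add: idx_def)
  have pidx: "(idx k + 1) mod n = idx (k + 1)" for k
    by (simp add: idx_def mod_Suc_eq add.assoc)
  have midx: "(idx (k+1) + (n - 1)) mod n = idx k" for k
  proof -
    have "(idx (k+1) + (n - 1)) mod n = (v + (n - 3) + (k + 1) + (n - 1)) mod n"
      by (simp add: idx_def mod_add_left_eq)
    also have "\<dots> = (v + (n - 3) + k + n) mod n"
    proof -
      have "v + (n - 3) + (k + 1) + (n - 1) = v + (n - 3) + k + n" using assms(1) by arith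
      then show ?thesis by simp
    qed
    also have "\<dots> = idx k" by (simp add: idx_def)
    finally show ?thesis .
  qed
  have Sidx: "S (idx (k+1)) = f (idx k) + f (idx (k+1)) + f (idx (k+2))" for k
    unfolding S_def midx pidx by (simp add: add.assoc)
  have iv: "idx 3 = v" using v assms(1) by (simp add: idx_def)
  have fin: "f (idx k) \<in> {-1,1,2}" for k using assms(3) idxn by (auto simp: cycle_vertices_def)
  define C where "C = idx ` {1..5}"
  have injC: "inj_on idx {1..5}"
  proof (rule inj_onI)
    fix i j assume "i \<in> {1..5::nat}" "j \<in> {1..5::nat}" "idx i = idx j"
    then show "i = j" using mod_inj[of "v + (n-3)" i n j] assms(1) by (auto simp: idx_def)
  qed
  have "(\<Sum>y\<in>C. S y) = (\<Sum>k\<in>{1..5}. S (idx k))"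
    unfolding C_def by (rule sum.reindex[OF injC, unfolded comp_def])
  also have "\<dots> = S (idx 1) + S (idx 2) + S (idx 3) + S (idx 4) + S (idx 5)"
    by (simp add: numeral_eq_Suc)
  finally have sC: "(\<Sum>y\<in>C. S y) = S (idx 1) + S (idx 2) + S (idx 3) + S (idx 4) + S (idx 5)" .
  have "(\<Sum>y\<in>C. S y) \<le> (\<Sum>y\<in>{0..<n}. S y)"
    by (rule sum_mono2) (auto simp: C_def idxn Snn)
  then have le: "S (idx 1) + S (idx 2) + S (idx 3) + S (idx 4) + S (idx 5) \<le> 3"
    using sC sumS by simp
  have e1: "S (idx 1) = f (idx 0) + f (idx 1) + f (idx 2)" using Sidx[of 0] by (simp add: eval_nat_numeral)
  have e2: "S (idx 2) = f (idx 1) + f (idx 2) + f (idx 3)" using Sidx[of 1] by (simp add: eval_nat_numeral)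
  have e3: "S (idx 3) = f (idx 2) + f (idx 3) + f (idx 4)" using Sidx[of 2] by (simp add: numeral_eq_Suc)
  have e4: "S (idx 4) = f (idx 3) + f (idx 4) + f (idx 5)" using Sidx[of 3] by (simp add: numeral_eq_Suc)
  have e5: "S (idx 5) = f (idx 4) + f (idx 5) + f (idx 6)" using Sidx[of 4] by (simp add: numeral_eq_Suc)
  have f3: "f (idx 3) = 1" using iv v by simp
  have "S (idx 1) \<ge> 0" "S (idx 2) \<ge> 0" "S (idx 3) \<ge> 0" "S (idx 4) \<ge> 0" "S (idx 5) \<ge> 0"
    using Snn idxn by auto
  then show False
    using fin_case[OF fin[of 0] fin[of 1] fin[of 2] fin[of 4] fin[of 5] fin[of 6]]
      le e1 e2 e3 e4 e5 f3
    by linarith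
qed

end
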